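(* Consider the stochastic quadratic problem with symmetric positive definite $Q=(q_{ij})\in\mathbb{R}^{d\times d}$ having eigenvalues $\lambda_1,\dots,\lambda_d>0$, and fix $\theta$. For the stochastic direction $z=-\operatorname{sign}(g(\theta))$, the expected improvement with optimal step size satisfies $$\mathcal{I}_{\mathrm{SSD}}(\theta)\ge\frac12\,\frac{\Big(\sum_{i=1}^d(2\rho_i-1)\,|\nabla\mathcal{L}(\theta)_i|\Big)^2}{\sum_{i=1}^d\lambda_i}\;p_{\mathrm{diag}}(Q),$$ where $\rho_i=\mathbf{P}[\operatorname{sign}(g(\theta)_i)=\operatorname{sign}(\nabla\mathcal{L}(\theta)_i)]$ and $p_{\mathrm{diag}}(Q)=\big(\sum_{i=1}^d|q_{ii}|\big)/\big(\sum_{i,j=1}^d|q_{ij}|\big)$.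
   Context: Stochastic quadratic problem (sQP): loss $\ell(\theta;x)=\frac12(\theta-x)^TQ(\theta-x)$ with data $x\sim\mathcal{N}(x^\ast,\nu^2I)$, $\nu\ge0$; objective $\mathcal{L}(\theta)=\mathbf{E}_x[\ell(\theta;x)]$, with $\nabla\mathcal{L}(\theta)=Q(\theta-x^\ast)$; stochastic gradient $g(\theta)=Q(\theta-x)\sim\mathcal{N}(\nabla\mathcal{L}(\theta),\nu^2QQ)$. $\operatorname{sign}$ is applied element-wise with $\operatorname{sign}(0)=1$. For a random direction $z$ with $\mathbf{E}[z^TQz]>0$, the expected improvement with the optimal step size $\alpha_\ast=-\nabla\mathcal{L}(\theta)^T\mathbf{E}[z]/\mathbf{E}[z^TQz]$ is $\mathcal{I}(\theta):=|\mathbf{E}[\mathcal{L}(\theta+\alpha_\ast z)]-\mathcal{L}(\theta)|=\frac{(\nabla\mathcal{L}(\theta)^T\mathbf{E}[z])^2}{2\,\mathbf{E}[z^TQz]}$. *)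

theory Defs
  imports "HOL-Probability.Probability"
begin

definition sgn1 :: "real \<Rightarrow> real" where
  "sgn1 t = (if t \<ge> 0 then 1 else -1)"

definition sqp_data :: "real^'d \<Rightarrow> real \<Rightarrow> (real^'d) measure" where
  "sqp_data xstar \<nu> =
     (if \<nu> = 0 then return borel xstar
      else density lborel (\<lambda>x. ennreal (\<Prod>i\<in>UNIV. normal_density (xstar $ i) \<nu> (x $ i))))"

definition sqp_loss :: "real^'d^'d \<Rightarrow> real^'d \<Rightarrow> real^'d \<Rightarrow> real" where
  "sqp_loss Q \<theta> x = 1/2 * ((\<theta> - x) \<bullet> (Q *v (\<theta> - x)))"

definition sqp_grad :: "real^'d^'d \<Rightarrow> real^'d \<Rightarrow> real^'d \<Rightarrow> real^'d" where
  "sqp_grad Q xstar \<theta> = Q *v (\<theta> - xstar)"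

definition sqp_stoch_grad :: "real^'d^'d \<Rightarrow> real^'d \<Rightarrow> real^'d \<Rightarrow> real^'d" where
  "sqp_stoch_grad Q \<theta> x = Q *v (\<theta> - x)"

definition exp_improvement ::
  "(real^'d) measure \<Rightarrow> real^'d^'d \<Rightarrow> real^'d \<Rightarrow> (real^'d \<Rightarrow> real^'d) \<Rightarrow> real" where
  "exp_improvement M Q gradL z =
     (gradL \<bullet> (\<integral>x. z x \<partial>M))\<^sup>2 / (2 * (\<integral>x. z x \<bullet> (Q *v z x) \<partial>M))"

definition ssd_dir :: "real^'d^'d \<Rightarrow> real^'d \<Rightarrow> real^'d \<Rightarrow> real^'d" where
  "ssd_dir Q \<theta> x = (\<chi> i. - sgn1 (sqp_stoch_grad Q \<theta> x $ i))"

definition ssd_improvement :: "real^'d^'d \<Rightarrow> real^'d \<Rightarrow> real \<Rightarrow> real^'d \<Rightarrow> real" where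
  "ssd_improvement Q xstar \<nu> \<theta> =
     exp_improvement (sqp_data xstar \<nu>) Q (sqp_grad Q xstar \<theta>) (ssd_dir Q \<theta>)"

definition sign_agree_prob :: "real^'d^'d \<Rightarrow> real^'d \<Rightarrow> real \<Rightarrow> real^'d \<Rightarrow> 'd \<Rightarrow> real" where
  "sign_agree_prob Q xstar \<nu> \<theta> i =
     measure (sqp_data xstar \<nu>)
       {x. sgn1 (sqp_stoch_grad Q \<theta> x $ i) = sgn1 (sqp_grad Q xstar \<theta> $ i)}"

definition p_diag :: "real^'d^'d \<Rightarrow> real" where
  "p_diag Q = (\<Sum>i\<in>UNIV. \<bar>Q $ i $ i\<bar>) / (\<Sum>i\<in>UNIV. \<Sum>j\<in>UNIV. \<bar>Q $ i $ j\<bar>)"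

definition diag_mat :: "('d \<Rightarrow> real) \<Rightarrow> real^'d^'d" where
  "diag_mat l = (\<chi> i j. if i = j then l i else 0)"

end

theory Submission
  imports Defs
begin

lemma basis_vec_real: "(Basis :: (real^'d) set) = range (\<lambda>i. axis i 1)"
  by (auto simp: Basis_vec_def)

lemma prob_sqp: fixes xstar :: "real^'d" assumes nu: "0 \<le> \<nu>" shows "prob_space (sqp_data xstar \<nu>)"
proof (cases "\<nu> = 0")
  case True
  then show ?thesis by (simp add: sqp_data_def prob_space_return)
next
  case False
  with nu have nupos: "0 < \<nu>" by simp
  let ?f = "\<lambda>b t. normal_density (xstar \<bullet> b) \<nu> t"
  have eq: "(\<Prod>i\<in>UNIV. normal_density (xstar $ i) \<nu> (x $ i)) = (\<Prod>b\<in>Basis. ?f b (x \<bullet> b))" for x :: "real^'d"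
  proof -
    have inj: "inj_on (\<lambda>i::'d. axis i (1::real)) UNIV"
      by (auto simp: inj_on_def axis_eq_axis)
    show ?thesis unfolding basis_vec_real
      by (subst prod.reindex[OF inj]) (simp add: inner_axis)
  qed
  have "(\<integral>\<^sup>+x. ennreal (\<Prod>i\<in>UNIV. normal_density (xstar $ i) \<nu> (x $ i)) \<partial>lborel) = 
        (\<integral>\<^sup>+x. (\<Prod>b\<in>Basis. ennreal (?f b (x \<bullet> b))) \<partial>lborel)"
    unfolding eq by (simp add: prod_ennreal)
  also have "\<dots> = (\<Prod>b\<in>(Basis::(real^'d) set). (\<integral>\<^sup>+x. ennreal (?f b x) \<partial>lborel))"
    by (rule nn_integral_lborel_prod) auto
  also have "\<dots> = 1"
  proof (rule prod.neutral, intro ballI)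
    fix b :: "real^'d"
    interpret p: prob_space "density lborel (normal_density (xstar \<bullet> b) \<nu>)"
      using nupos by (rule prob_space_normal_density)
    have "emeasure (density lborel (normal_density (xstar \<bullet> b) \<nu>)) UNIV = 1"
      using p.emeasure_space_1 by simp
    then show "(\<integral>\<^sup>+x. ennreal (?f b x) \<partial>lborel) = 1"
      by (simp add: emeasure_density)
  qed
  finally show ?thesis using False
    by (intro prob_spaceI) (simp add: sqp_data_def emeasure_density)
qed

lemma trace_eq:
  fixes U :: "real^'d^'d" and lam :: "'d \<Rightarrow> real"
  assumes "orthogonal_matrix U"
  shows "(\<Sum>i\<in>UNIV. (U ** diag_mat lam ** transpose U) $ i $ i) = (\<Sum>k\<in>UNIV. lam k)"
    and "\<And>i. (U ** diag_mat lam ** transpose U) $ i $ i = (\<Sum>k\<in>UNIV. (U $ i $ k)^2 * lam k)"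
proof -
  have UD: "(U ** diag_mat lam) $ i $ k = U $ i $ k * lam k" for i k
    by (simp add: matrix_matrix_mult_def diag_mat_def if_distrib cong: if_cong)
  show dd: "(U ** diag_mat lam ** transpose U) $ i $ i = (\<Sum>k\<in>UNIV. (U $ i $ k)^2 * lam k)" for i
  proof -
    have "(U ** diag_mat lam ** transpose U) $ i $ i = (\<Sum>k\<in>UNIV. (U ** diag_mat lam) $ i $ k * U $ i $ k)"
      unfolding matrix_matrix_mult_def[of "U ** diag_mat lam" "transpose U"] by (simp add: transpose_def)
    then show ?thesis by (simp add: UD power2_eq_square algebra_simps)
  qed
  have col: "(\<Sum>i\<in>UNIV. (U $ i $ k)^2) = 1" for k
  proof -
    have "(transpose U ** U) $ k $ k = 1" using assms by (simp add: orthogonal_matrix_def mat_def)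
    then show ?thesis by (simp add: matrix_matrix_mult_def transpose_def power2_eq_square)
  qed
  have "(\<Sum>i\<in>UNIV. (U ** diag_mat lam ** transpose U) $ i $ i) = (\<Sum>k\<in>UNIV. lam k * (\<Sum>i\<in>UNIV. (U $ i $ k)^2))"
    unfolding dd by (subst sum.swap) (simp add: sum_distrib_left algebra_simps)
  then show "(\<Sum>i\<in>UNIV. (U ** diag_mat lam ** transpose U) $ i $ i) = (\<Sum>k\<in>UNIV. lam k)"
    by (simp add: col)
qed

lemma ssd_meas: "ssd_dir Q \<theta> \<in> borel_measurable borel"
proof -
  have "(\<lambda>x. ssd_dir Q \<theta> x \<bullet> b) \<in> borel_measurable borel" if hb: "b \<in> Basis" for b
  proof -
    obtain i where b: "b = axis i 1" using hb unfolding basis_vec_real by blast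
    have c: "continuous_on UNIV (\<lambda>x. (Q *v (\<theta> - x)) $ i)"
      by (intro continuous_intros bounded_linear.continuous_on[OF matrix_vector_mul_bounded_linear])
    have m: "(\<lambda>x. (Q *v (\<theta> - x)) $ i) \<in> borel_measurable borel"
      using c by (rule borel_measurable_continuous_onI)
    have "(\<lambda>x. ssd_dir Q \<theta> x \<bullet> b) = (\<lambda>x. if (Q *v (\<theta> - x)) $ i \<ge> 0 then -1 else 1)"
      by (auto simp: b inner_axis ssd_dir_def sgn1_def sqp_stoch_grad_def)
    then show ?thesis using m by simp
  qed
  then show ?thesis by (subst borel_measurable_euclidean_space) auto
qed


theorem mainTheorem6:
  fixes Q U :: "real^'d^'d" and lam :: "'d \<Rightarrow> real"
    and xstar \<theta> :: "real^'d" and \<nu> :: real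
  assumes sym: "transpose Q = Q"
    and pd: "\<forall>v. v \<noteq> 0 \<longrightarrow> 0 < v \<bullet> (Q *v v)"
    and eig: "orthogonal_matrix U" "Q = U ** diag_mat lam ** transpose U"
    and lam_pos: "\<forall>i. 0 < lam i"
    and nu: "0 \<le> \<nu>"
  shows "ssd_improvement Q xstar \<nu> \<theta> \<ge>
    1/2 * (\<Sum>i\<in>UNIV. (2 * sign_agree_prob Q xstar \<nu> \<theta> i - 1) * \<bar>sqp_grad Q xstar \<theta> $ i\<bar>)\<^sup>2
        / (\<Sum>i\<in>UNIV. lam i) * p_diag Q"
proof -
  define M where "M = sqp_data xstar \<nu>"
  define z where "z = ssd_dir Q \<theta>"
  define G where "G = sqp_grad Q xstar \<theta>"
  define g where "g = (\<lambda>x. Q *v (\<theta> - x))"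
  define A where "A = (\<lambda>i. {x. g x $ i \<ge> 0})"
  define K where "K = (\<Sum>i\<in>UNIV. (2 * sign_agree_prob Q xstar \<nu> \<theta> i - 1) * \<bar>G $ i\<bar>)"
  define S where "S = (\<Sum>i\<in>UNIV. \<Sum>j\<in>UNIV. \<bar>Q $ i $ j\<bar>)"
  define T where "T = (\<Sum>i\<in>UNIV. lam i)"
  interpret P: prob_space M unfolding M_def using nu by (rule prob_sqp)
  have setsM: "sets M = sets borel"
    by (simp add: M_def sqp_data_def)
  have spM: "space M = UNIV"
    using setsM sets_eq_imp_space_eq by fastforce
  have zmeas: "z \<in> borel_measurable M"
    unfolding z_def using ssd_meas measurable_cong_sets[OF setsM refl] by blast
  have zi: "z x $ i = - sgn1 (g x $ i)" for x i
    by (simp add: z_def ssd_dir_def g_def sqp_stoch_grad_def)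
  have zabs: "\<bar>z x $ i\<bar> = 1" for x i
    by (simp add: zi sgn1_def)
  have gimeas: "(\<lambda>x. g x $ i) \<in> borel_measurable M" for i
  proof -
    have "(\<lambda>x. g x $ i) \<in> borel_measurable borel"
      unfolding g_def
      by (intro borel_measurable_continuous_onI continuous_intros
            bounded_linear.continuous_on[OF matrix_vector_mul_bounded_linear])
    then show ?thesis using measurable_cong_sets[OF setsM refl] by blast
  qed
  have Aev: "A i \<in> P.events" for i
  proof -
    have "A i = (\<lambda>x. g x $ i) -` {0..} \<inter> space M" by (auto simp: A_def spM)
    then show ?thesis using gimeas[of i] by (metis atLeast_borel measurable_sets)
  qed
  have zint: "integrable M z"
  proof (rule P.integrable_const_bound[where B="real CARD('d)"])
    show "AE x in M. norm (z x) \<le> real CARD('d)"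
    proof (intro AE_I2)
      fix x
      have "norm (z x) \<le> (\<Sum>i\<in>UNIV. \<bar>z x $ i\<bar>)" by (rule norm_le_l1_cart)
      then show "norm (z x) \<le> real CARD('d)" by (simp add: zabs)
    qed
  qed (rule zmeas)
  have Ezi: "(\<integral>x. z x $ i \<partial>M) = 1 - 2 * P.prob (A i)" for i
  proof -
    have "(\<lambda>x. z x $ i) = (\<lambda>x. 1 - 2 * indicator (A i) x)"
      by (auto simp: zi sgn1_def A_def indicator_def)
    moreover have ii: "integrable M (indicator (A i) :: _ \<Rightarrow> real)"
      using Aev[of i] by (simp add: P.emeasure_eq_measure)
    moreover have "P.expectation (\<lambda>x. 1 - 2 * indicator (A i) x) = P.expectation (\<lambda>x. 1) - P.expectation (\<lambda>x. 2 * indicator (A i) x :: real)"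
      using ii by (intro Bochner_Integration.integral_diff) auto
    ultimately show ?thesis using Aev[of i] by (simp add: P.prob_space)
  qed
  have num: "G \<bullet> (\<integral>x. z x \<partial>M) = (\<Sum>i\<in>UNIV. G $ i * (1 - 2 * P.prob (A i)))"
  proof -
    have "G \<bullet> (\<integral>x. z x \<partial>M) = (\<integral>x. G \<bullet> z x \<partial>M)"
      using zint by simp
    also have "\<dots> = (\<integral>x. (\<Sum>i\<in>UNIV. G $ i * z x $ i) \<partial>M)"
      by (simp add: inner_vec_def)
    also have "\<dots> = (\<Sum>i\<in>UNIV. G $ i * (\<integral>x. z x $ i \<partial>M))"
    proof -
      have ii: "integrable M (\<lambda>x. z x $ i)" for i
        using integrable_inner_left[OF zint, of "axis i 1"] by (simp add: inner_axis)
      show ?thesis using ii by (subst Bochner_Integration.integral_sum) auto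
    qed
    finally show ?thesis by (simp add: Ezi)
  qed
  have rho: "(2 * sign_agree_prob Q xstar \<nu> \<theta> i - 1) * \<bar>G $ i\<bar> = G $ i * (2 * P.prob (A i) - 1)" for i
  proof (cases "G $ i \<ge> 0")
    case True
    have "{x. sgn1 (sqp_stoch_grad Q \<theta> x $ i) = sgn1 (sqp_grad Q xstar \<theta> $ i)} = A i"
      using True by (auto simp: A_def g_def sgn1_def sqp_stoch_grad_def G_def)
    then show ?thesis using True by (simp add: sign_agree_prob_def M_def[symmetric])
  next
    case False
    have "{x. sgn1 (sqp_stoch_grad Q \<theta> x $ i) = sgn1 (sqp_grad Q xstar \<theta> $ i)} = space M - A i"
      using False by (auto simp: A_def g_def sgn1_def sqp_stoch_grad_def G_def spM)
    moreover have h: "P.prob (space M - A i) = 1 - P.prob (A i)" using P.prob_compl[OF Aev[of i]] .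
    ultimately have "sign_agree_prob Q xstar \<nu> \<theta> i = 1 - P.prob (A i)"
      by (simp add: sign_agree_prob_def M_def[symmetric])
    then show ?thesis using False by (simp add: abs_of_neg) (simp add: algebra_simps)
  qed
  have numsq: "(G \<bullet> (\<integral>x. z x \<partial>M))\<^sup>2 = K\<^sup>2"
  proof -
    have "K = - (G \<bullet> (\<integral>x. z x \<partial>M))"
      unfolding K_def num rho by (simp add: sum_negf[symmetric] algebra_simps)
    then show ?thesis by simp
  qed
  define D where "D = (\<integral>x. z x \<bullet> (Q *v z x) \<partial>M)"
  have quad: "z x \<bullet> (Q *v z x) = (\<Sum>i\<in>UNIV. \<Sum>j\<in>UNIV. z x $ i * (Q $ i $ j * z x $ j))" for x
    by (simp add: inner_vec_def matrix_vector_mult_def sum_distrib_left)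
  have qle: "z x \<bullet> (Q *v z x) \<le> S" for x
    unfolding quad S_def
  proof (intro sum_mono)
    fix i j
    have "z x $ i * (Q $ i $ j * z x $ j) \<le> \<bar>z x $ i * (Q $ i $ j * z x $ j)\<bar>" by simp
    also have "\<dots> = \<bar>Q $ i $ j\<bar>" by (simp add: abs_mult zabs)
    finally show "z x $ i * (Q $ i $ j * z x $ j) \<le> \<bar>Q $ i $ j\<bar>" .
  qed
  have qpos: "0 < z x \<bullet> (Q *v z x)" for x
  proof -
    have "z x $ undefined \<noteq> 0" using zabs[of x undefined] by auto
    then have "z x \<noteq> 0" by auto
    then show ?thesis using pd by blast
  qed
  have qmeas: "(\<lambda>x. z x \<bullet> (Q *v z x)) \<in> borel_measurable M"
  proof -
    have lm: "((*v) Q) \<in> borel_measurable borel"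
      by (intro borel_measurable_continuous_onI linear_continuous_on matrix_vector_mul_bounded_linear)
    have "(\<lambda>x. Q *v z x) \<in> borel_measurable M" using measurable_compose[OF zmeas lm] .
    then show ?thesis using zmeas by (intro borel_measurable_inner)
  qed
  have qint: "integrable M (\<lambda>x. z x \<bullet> (Q *v z x))"
  proof (rule P.integrable_const_bound[where B="S"])
    show "AE x in M. norm (z x \<bullet> (Q *v z x)) \<le> S"
      using qle qpos by (intro AE_I2) (simp add: less_imp_le)
  qed (rule qmeas)
  have DleS: "D \<le> S"
  proof -
    have "D \<le> (\<integral>x. S \<partial>M)" unfolding D_def
      by (rule integral_mono[OF qint]) (auto simp: qle)
    then show ?thesis by (simp add: P.prob_space)
  qed
  have Dpos: "0 < D"
  proof -
    have "D \<ge> 0" unfolding D_def using qpos by (simp add: less_imp_le)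
    moreover have "D \<noteq> 0"
    proof
      assume "D = 0"
      then have "AE x in M. z x \<bullet> (Q *v z x) = 0"
        unfolding D_def using integral_nonneg_eq_0_iff_AE[OF qint] qpos
        by (simp add: less_imp_le)
      then have "AE x in M. False"
        by (rule AE_mp) (intro AE_I2 impI, metis qpos less_irrefl)
      then show False by (simp add: P.AE_False)
    qed
    ultimately show ?thesis by simp
  qed
  have diag: "Q $ i $ i = (\<Sum>k\<in>UNIV. (U $ i $ k)^2 * lam k)" for i
    using trace_eq(2)[OF eig(1)] eig(2) by simp
  have diagnn: "\<bar>Q $ i $ i\<bar> = Q $ i $ i" for i
    unfolding diag using lam_pos by (intro abs_of_nonneg sum_nonneg) (simp add: less_imp_le)
  have trQ: "(\<Sum>i\<in>UNIV. \<bar>Q $ i $ i\<bar>) = T"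
    unfolding diagnn T_def using trace_eq(1)[OF eig(1)] eig(2) by simp
  have Tpos: "0 < T" unfolding T_def using lam_pos
    by (intro sum_pos) auto
  have TleS: "T \<le> S"
    unfolding trQ[symmetric] S_def
    by (intro sum_mono member_le_sum) auto
  have Spos: "0 < S" using Tpos TleS by simp
  have lhs: "ssd_improvement Q xstar \<nu> \<theta> = K\<^sup>2 / (2 * D)"
    unfolding ssd_improvement_def exp_improvement_def
    by (simp add: M_def[symmetric] z_def[symmetric] G_def[symmetric] D_def[symmetric] numsq)
  have rhs: "1/2 * K\<^sup>2 / T * p_diag Q = K\<^sup>2 / (2 * S)"
    unfolding p_diag_def trQ S_def[symmetric] using Tpos by (simp add: field_simps)
  have "K\<^sup>2 / (2 * S) \<le> K\<^sup>2 / (2 * D)"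
    using Dpos DleS by (intro divide_left_mono) auto
  then show ?thesis
    unfolding lhs T_def[symmetric] K_def[symmetric] G_def[symmetric] rhs .
qed

end
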